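(* Let $K,L,T$ be positive integers and let $(\alpha,\beta)\in\mathcal{A}(K,L,T)$ be a degree table, with $N=\operatorname{N}(\alpha,\beta)$. Then: (1) $KL+\max\{K,L\}+2T-1 \le N$; (2) if $3\max\{K,L\}+3T-2 < KL$ or $2 \le K = L$, then $KL+\max\{K,L\}+2T \le N$; (3) $KL+K+L+2T-1-T\min\{K,L,T\} \le N$.
   Context: A degree table with parameters $K,L,T$ is a tuple $(\alpha_{\mathrm p},\alpha_{\mathrm s},\beta_{\mathrm p},\beta_{\mathrm s})$ of nonnegative integer vectors of lengths $K,T,L,T$ respectively such that, writing $\alpha=(\alpha_{\mathrm p}\mid\alpha_{\mathrm s})$ and $\beta=(\beta_{\mathrm p}\mid\beta_{\mathrm s})$ for the concatenations: (i) all entries of $\alpha$ are distinct; (ii) all entries of $\beta$ are distinct; (iii) for every integer $n\in\operatorname{Set}(\alpha_{\mathrm p})+\operatorname{Set}(\beta_{\mathrm p})$ there is a unique $i\in\operatorname{Set}(\alpha)$ and a unique $j\in\operatorname{Set}(\beta)$ with $n=i+j$. Here $\operatorname{Set}(v)$ is the set of entries of $v$ and $A+B=\{a+b:a\in A,b\in B\}$. $\mathcal{A}(K,L,T)$ denotes the set of all such degree tables, and $\operatorname{N}(\alpha,\beta)=|\operatorname{Set}(\alpha)+\operatorname{Set}(\beta)|$. *)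

theory Defs
  imports Main
begin

definition sumset :: "nat set \<Rightarrow> nat set \<Rightarrow> nat set" where
  "sumset A B = {a + b | a b. a \<in> A \<and> b \<in> B}"

text \<open>Degree tables: vectors are lists of natural numbers;
  alpha = ap @ as, beta = bp @ bs.\<close>
definition degree_table ::
  "nat \<Rightarrow> nat \<Rightarrow> nat \<Rightarrow> nat list \<Rightarrow> nat list \<Rightarrow> nat list \<Rightarrow> nat list \<Rightarrow> bool" where
  "degree_table K L T ap as bp bs \<longleftrightarrow>
     length ap = K \<and> length as = T \<and> length bp = L \<and> length bs = T \<and>
     distinct (ap @ as) \<and> distinct (bp @ bs) \<and>
     (\<forall>n \<in> sumset (set ap) (set bp).
        \<exists>!p. p \<in> set (ap @ as) \<times> set (bp @ bs) \<and> fst p + snd p = n)"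

definition NN :: "nat list \<Rightarrow> nat list \<Rightarrow> nat" where
  "NN \<alpha> \<beta> = card (sumset (set \<alpha>) (set \<beta>))"

end

theory Submission
  imports Defs
begin


lemma sumset_iff: "z \<in> sumset X Y \<longleftrightarrow> (\<exists>a\<in>X. \<exists>b\<in>Y. z = a + b)"
  unfolding sumset_def by blast

lemma sumset_img: "sumset X Y = (\<lambda>(a,b). a + b) ` (X \<times> Y)"
  unfolding sumset_def by auto

lemma finite_sumset: "finite X \<Longrightarrow> finite Y \<Longrightarrow> finite (sumset X Y)"
  unfolding sumset_img by simp

lemma sumset_commute: "sumset X Y = sumset Y X"
  unfolding sumset_def using add.commute by fastforce

lemma sumset_mono: "X \<subseteq> X' \<Longrightarrow> Y \<subseteq> Y' \<Longrightarrow> sumset X Y \<subseteq> sumset X' Y'"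
  unfolding sumset_def by blast

lemma chain_card1:
  fixes X Y :: "nat set"
  assumes "finite X" "finite Y" "X \<noteq> {}" "Y \<noteq> {}"
  shows "card ((\<lambda>x. x + Min Y) ` X \<union> (\<lambda>y. Max X + y) ` Y) = card X + card Y - 1"
proof -
  let ?U = "(\<lambda>x. x + Min Y) ` X" and ?V = "(\<lambda>y. Max X + y) ` Y"
  have cU: "card ?U = card X" by (rule card_image) (auto simp: inj_on_def)
  have cV: "card ?V = card Y" by (rule card_image) (auto simp: inj_on_def)
  have I: "?U \<inter> ?V = {Max X + Min Y}"
  proof
    show "?U \<inter> ?V \<subseteq> {Max X + Min Y}"
    proof
      fix z assume "z \<in> ?U \<inter> ?V"
      then obtain x y where x: "x \<in> X" and y: "y \<in> Y" and z1: "z = x + Min Y" and z2: "z = Max X + y" by auto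
      have "x \<le> Max X" using x assms by simp
      moreover have "Min Y \<le> y" using y assms by simp
      ultimately show "z \<in> {Max X + Min Y}" using z1 z2 by simp
    qed
    show "{Max X + Min Y} \<subseteq> ?U \<inter> ?V" using assms by auto
  qed
  have "card ?U + card ?V = card (?U \<union> ?V) + card (?U \<inter> ?V)"
    by (rule card_Un_Int) (use assms in auto)
  then show ?thesis using I cU cV by simp
qed

lemma chain_card2:
  fixes X Y :: "nat set"
  assumes "finite X" "finite Y" "X \<noteq> {}" "Y \<noteq> {}"
  shows "card ((\<lambda>y. Min X + y) ` Y \<union> (\<lambda>x. x + Max Y) ` X) = card X + card Y - 1"
proof -
  let ?U = "(\<lambda>y. Min X + y) ` Y" and ?V = "(\<lambda>x. x + Max Y) ` X"
  have cU: "card ?U = card Y" by (rule card_image) (auto simp: inj_on_def)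
  have cV: "card ?V = card X" by (rule card_image) (auto simp: inj_on_def)
  have I: "?U \<inter> ?V = {Min X + Max Y}"
  proof
    show "?U \<inter> ?V \<subseteq> {Min X + Max Y}"
    proof
      fix z assume "z \<in> ?U \<inter> ?V"
      then obtain x y where x: "x \<in> X" and y: "y \<in> Y" and z1: "z = Min X + y" and z2: "z = x + Max Y" by auto
      have "Min X \<le> x" using x assms by simp
      moreover have "y \<le> Max Y" using y assms by simp
      ultimately show "z \<in> {Min X + Max Y}" using z1 z2 by simp
    qed
    show "{Min X + Max Y} \<subseteq> ?U \<inter> ?V" using assms by auto
  qed
  have "card ?U + card ?V = card (?U \<union> ?V) + card (?U \<inter> ?V)"
    by (rule card_Un_Int) (use assms in auto)
  then show ?thesis using I cU cV by simp
qed

lemma CD: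
  fixes X Y :: "nat set"
  assumes "finite X" "finite Y" "X \<noteq> {}" "Y \<noteq> {}"
  shows "card X + card Y - 1 \<le> card (sumset X Y)"
proof -
  have "(\<lambda>x. x + Min Y) ` X \<union> (\<lambda>y. Max X + y) ` Y \<subseteq> sumset X Y"
  proof -
    have "Min Y \<in> Y" "Max X \<in> X" using assms by auto
    then show ?thesis unfolding sumset_def by blast
  qed
  then have "card ((\<lambda>x. x + Min Y) ` X \<union> (\<lambda>y. Max X + y) ` Y) \<le> card (sumset X Y)"
    by (intro card_mono finite_sumset) (use assms in auto)
  then show ?thesis using chain_card1[OF assms] by simp
qed

lemma ap_struct:
  fixes X :: "nat set" and d :: nat
  assumes fin: "finite X" and ne: "X \<noteq> {}" and d: "0 < d"
    and cl: "\<And>x. x \<in> X \<Longrightarrow> x \<noteq> Max X \<Longrightarrow> x + d \<in> X"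
  shows "x \<in> X \<longleftrightarrow> (\<exists>k<card X. x = Min X + k*d)"
proof -
  have dv: "d dvd (Max X - x)" if "x \<in> X" for x
  proof -
    have "\<forall>x. x \<in> X \<longrightarrow> Max X - x = m \<longrightarrow> d dvd (Max X - x)" for m
    proof (induction m rule: less_induct)
      case (less m)
      show ?case
      proof (intro allI impI)
        fix x assume x: "x \<in> X" and m: "Max X - x = m"
        show "d dvd (Max X - x)"
        proof (cases "x = Max X")
          case True then show ?thesis by simp
        next
          case False
          have le: "x \<le> Max X" using x fin by simp
          have xd: "x + d \<in> X" using cl x False by simp
          have le2: "x + d \<le> Max X" using xd fin by simp
          have "d dvd (Max X - (x + d))" using less.IH[of "Max X - (x+d)"] xd m d le2 False le by auto
          then have "d dvd (Max X - (x + d) + d)" by simp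
          moreover have "Max X - (x + d) + d = Max X - x" using le2 by simp
          ultimately show ?thesis by simp
        qed
      qed
    qed
    then show ?thesis using that by blast
  qed
  define M where "M = (Max X - Min X) div d"
  have minin: "Min X \<in> X" using fin ne by simp
  have sub1: "X \<subseteq> (\<lambda>k. Min X + k*d) ` {..M}"
  proof
    fix x assume x: "x \<in> X"
    have "Min X \<le> x" using x fin by simp
    have xm: "x \<le> Max X" using x fin by simp
    have "d dvd (Max X - Min X) - (Max X - x)" using dvd_diff_nat[OF dv[OF minin] dv[OF x]] .
    moreover have "(Max X - Min X) - (Max X - x) = x - Min X" using \<open>Min X \<le> x\<close> xm by simp
    ultimately have dx: "d dvd (x - Min X)" by simp
    have "x = Min X + ((x - Min X) div d) * d" using dx \<open>Min X \<le> x\<close> by simp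
    moreover have "(x - Min X) div d \<le> M" unfolding M_def by (rule div_le_mono) (use xm in simp)
    ultimately show "x \<in> (\<lambda>k. Min X + k*d) ` {..M}" by blast
  qed
  have sub2: "Min X + k*d \<in> X" if "k \<le> M" for k
    using that
  proof (induction k)
    case 0 then show ?case using minin by simp
  next
    case (Suc k)
    have "Suc k * d \<le> M * d" using Suc.prems by (intro mult_le_mono1) simp
    also have "M * d \<le> Max X - Min X" unfolding M_def by simp
    finally have "Min X + k*d < Max X" using d by simp
    then have "Min X + k*d + d \<in> X" using cl Suc by auto
    then show ?case by (simp add: algebra_simps)
  qed
  have eq: "X = (\<lambda>k. Min X + k*d) ` {..M}" using sub1 sub2 by auto
  have inj: "inj_on (\<lambda>k. Min X + k*d) {..M}" using d by (auto simp: inj_on_def)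
  have cX: "card X = Suc M" using eq card_image[OF inj] by simp
  show ?thesis
  proof
    assume "x \<in> X" then obtain k where "k \<le> M" "x = Min X + k*d" using sub1 by blast
    then show "\<exists>k<card X. x = Min X + k*d" using cX by (intro exI[of _ k]) auto
  next
    assume "\<exists>k<card X. x = Min X + k*d"
    then show "x \<in> X" using sub2 cX by auto
  qed
qed




locale DT =
  fixes Ap As Bp Bs :: "nat set"
  assumes finAp: "finite Ap" and finAs: "finite As" and finBp: "finite Bp" and finBs: "finite Bs"
    and disjA: "Ap \<inter> As = {}" and disjB: "Bp \<inter> Bs = {}"
    and uniq: "\<And>a b a' b'. a \<in> Ap \<Longrightarrow> b \<in> Bp \<Longrightarrow> a' \<in> Ap \<union> As \<Longrightarrow> b' \<in> Bp \<union> Bs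
                 \<Longrightarrow> a + b = a' + b' \<Longrightarrow> a = a' \<and> b = b'"
begin

definition SS :: "nat set" where
  "SS = sumset (Ap \<union> As) (Bp \<union> Bs) - sumset Ap Bp"

lemma finSS: "finite SS"
  unfolding SS_def using finAp finAs finBp finBs by (simp add: finite_sumset)

lemma card_P: "card (sumset Ap Bp) = card Ap * card Bp"
proof -
  have "inj_on (\<lambda>(a,b). a + b) (Ap \<times> Bp)"
    by (auto simp: inj_on_def dest: uniq)
  then show ?thesis unfolding sumset_img by (simp add: card_image card_cartesian_product)
qed

lemma card_total: "card (sumset (Ap \<union> As) (Bp \<union> Bs)) = card Ap * card Bp + card SS"
proof -
  have sub: "sumset Ap Bp \<subseteq> sumset (Ap \<union> As) (Bp \<union> Bs)" by (rule sumset_mono) auto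
  have fin: "finite (sumset (Ap \<union> As) (Bp \<union> Bs))"
    using finAp finAs finBp finBs by (simp add: finite_sumset)
  have "card SS = card (sumset (Ap \<union> As) (Bp \<union> Bs)) - card (sumset Ap Bp)"
    unfolding SS_def by (rule card_Diff_subset) (use sub fin in \<open>auto intro: finite_subset\<close>)
  moreover have "card (sumset Ap Bp) \<le> card (sumset (Ap \<union> As) (Bp \<union> Bs))"
    by (rule card_mono[OF fin sub])
  ultimately show ?thesis using card_P by simp
qed

lemma S_in:
  assumes "a \<in> Ap \<union> As" "b \<in> Bp \<union> Bs" "a \<notin> Ap \<or> b \<notin> Bp"
  shows "a + b \<in> SS"
proof -
  have "a + b \<in> sumset (Ap \<union> As) (Bp \<union> Bs)" using assms unfolding sumset_def by blast
  moreover have "a + b \<notin> sumset Ap Bp"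
  proof
    assume "a + b \<in> sumset Ap Bp"
    then obtain a' b' where "a' \<in> Ap" "b' \<in> Bp" "a + b = a' + b'" unfolding sumset_def by blast
    then have "a' = a \<and> b' = b" using uniq[of a' b' a b] assms by auto
    then show False using assms \<open>a' \<in> Ap\<close> \<open>b' \<in> Bp\<close> by auto
  qed
  ultimately show ?thesis unfolding SS_def by simp
qed

lemma P_notin: "a \<in> Ap \<Longrightarrow> b \<in> Bp \<Longrightarrow> a + b \<notin> SS"
  unfolding SS_def sumset_def by blast

lemma sym: "DT Bp Bs Ap As"
proof
  show "finite Bp" "finite Bs" "finite Ap" "finite As" using finAp finAs finBp finBs by auto
  show "Bp \<inter> Bs = {}" "Ap \<inter> As = {}" using disjA disjB by auto
  fix a b a' b' assume h: "a \<in> Bp" "b \<in> Ap" "a' \<in> Bp \<union> Bs" "b' \<in> Ap \<union> As" "a + b = a' + b'"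
  have "b + a = b' + a'" using h(5) by simp
  then show "a = a' \<and> b = b'" using uniq[OF h(2) h(1) h(4) h(3)] by simp
qed

lemma SS_sym: "DT.SS Bp Bs Ap As = SS"
  using DT.SS_def[OF sym] SS_def sumset_commute by simp

lemma bound1:
  assumes "Bs \<noteq> {}" "Ap \<union> As \<noteq> {}"
  shows "card (Ap \<union> As) + card Bs - 1 \<le> card SS"
proof -
  have "sumset (Ap \<union> As) Bs \<subseteq> SS"
    using S_in disjB unfolding sumset_def by blast
  then have "card (sumset (Ap \<union> As) Bs) \<le> card SS" by (rule card_mono[OF finSS])
  moreover have "card (Ap \<union> As) + card Bs - 1 \<le> card (sumset (Ap \<union> As) Bs)"
    by (rule CD) (use assms finAp finAs finBs in auto)
  ultimately show ?thesis by simp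
qed

lemma boundW:
  assumes a0: "a0 \<in> As" and b0: "b0 \<in> Bs"
  shows "card Ap + card Bp \<le> card SS"
proof -
  let ?U = "(\<lambda>a. a + b0) ` Ap" and ?V = "(\<lambda>b. a0 + b) ` Bp"
  have cU: "card ?U = card Ap" by (rule card_image) (auto simp: inj_on_def)
  have cV: "card ?V = card Bp" by (rule card_image) (auto simp: inj_on_def)
  have finI: "finite (?U \<inter> ?V)" using finAp by simp
  have I1: "card (?U \<inter> ?V) \<le> Suc 0"
  proof (subst card_le_Suc0_iff_eq[OF finI], intro ballI)
    fix x y assume x: "x \<in> ?U \<inter> ?V" and y: "y \<in> ?U \<inter> ?V"
    obtain a b where a: "a \<in> Ap" and b: "b \<in> Bp" and x1: "x = a + b0" and x2: "x = a0 + b" using x by auto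
    obtain a' b' where a': "a' \<in> Ap" and b': "b' \<in> Bp" and y1: "y = a' + b0" and y2: "y = a0 + b'" using y by auto
    have "a + b' = a' + b" using x1 x2 y1 y2 by simp
    then have "a = a'" using uniq[of a b' a' b] a b a' b' by auto
    then show "x = y" using x1 y1 by simp
  qed
  have "card ?U + card ?V = card (?U \<union> ?V) + card (?U \<inter> ?V)"
    by (rule card_Un_Int) (use finAp finBp in auto)
  then have UV: "card Ap + card Bp \<le> card (?U \<union> ?V) + 1" using I1 cU cV by simp
  have notin: "a0 + b0 \<notin> ?U \<union> ?V"
  proof
    assume "a0 + b0 \<in> ?U \<union> ?V"
    then show False
    proof
      assume "a0 + b0 \<in> ?U" then show False using a0 disjA by auto
    next
      assume "a0 + b0 \<in> ?V" then show False using b0 disjB by auto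
    qed
  qed
  let ?W = "insert (a0 + b0) (?U \<union> ?V)"
  have cW: "card ?W = card (?U \<union> ?V) + 1" using notin finAp finBp by simp
  have "?W \<subseteq> SS"
  proof -
    have "a0 + b0 \<in> SS" using S_in a0 b0 disjA by blast
    moreover have "?U \<subseteq> SS" using S_in b0 disjB by blast
    moreover have "?V \<subseteq> SS" using S_in a0 disjA by blast
    ultimately show ?thesis by blast
  qed
  then have "card ?W \<le> card SS" by (rule card_mono[OF finSS])
  then show ?thesis using cW UV by simp
qed

end



context DT
begin

lemma main_T2:
  assumes Bp2: "2 \<le> card Bp" and cAs: "card As = T" and cBs: "card Bs = T" and T2: "2 \<le> T"
    and Apne: "Ap \<noteq> {}"
    and small: "card SS < card Ap + 2*T"
  shows False
proof -
  define A where "A = Ap \<union> As"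
  define n where "n = card A"
  have finA: "finite A" unfolding A_def using finAp finAs by simp
  have nK: "n = card Ap + T" unfolding n_def A_def using card_Un_disjoint[OF finAp finAs disjA] cAs by simp
  have Kpos: "0 < card Ap" using Apne finAp by (simp add: card_gt_0_iff)
  have Bsne: "Bs \<noteq> {}" using cBs T2 by auto
  have Asne: "As \<noteq> {}" using cAs T2 by auto
  have Ane: "A \<noteq> {}" unfolding A_def using Apne by simp
  define C where "C = sumset A Bs"
  have finC: "finite C" unfolding C_def using finA finBs by (simp add: finite_sumset)
  have CS: "C \<subseteq> SS" unfolding C_def A_def using S_in disjB unfolding sumset_def by blast
  have cardC_ge: "n + T - 1 \<le> card C"
    using CD[OF finA finBs Ane Bsne] cBs unfolding C_def n_def by simp
  have "card C \<le> card SS" by (rule card_mono[OF finSS CS])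
  then have cardC: "card C = n + T - 1" using cardC_ge small nK by simp
  have CeqS: "C = SS"
    by (rule card_subset_eq[OF finSS CS]) (use cardC small nK \<open>card C \<le> card SS\<close> in simp)
  define amin where "amin = Min A"
  define amax where "amax = Max A"
  define s1 where "s1 = Min Bs"
  define sT where "sT = Max Bs"
  have s1in: "s1 \<in> Bs" unfolding s1_def using finBs Bsne by simp
  have sTin: "sT \<in> Bs" unfolding sT_def using finBs Bsne by simp
  have aminA: "amin \<in> A" unfolding amin_def using finA Ane by simp
  have amaxA: "amax \<in> A" unfolding amax_def using finA Ane by simp
  have Bs1: "Bs - {s1} \<noteq> {}"
  proof
    assume "Bs - {s1} = {}"
    then have "Bs \<subseteq> {s1}" by auto
    then have "card Bs \<le> 1" using card_mono[of "{s1}" Bs] by simp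
    then show False using cBs T2 by simp
  qed
  define s2 where "s2 = Min (Bs - {s1})"
  have s2in: "s2 \<in> Bs" "s2 \<noteq> s1" unfolding s2_def using Min_in[of "Bs - {s1}"] finBs Bs1 by auto
  have s2min: "\<And>s. s \<in> Bs \<Longrightarrow> s \<noteq> s1 \<Longrightarrow> s2 \<le> s" unfolding s2_def using finBs by simp
  have s1le: "\<And>s. s \<in> Bs \<Longrightarrow> s1 \<le> s" unfolding s1_def using finBs by simp
  have sTge: "\<And>s. s \<in> Bs \<Longrightarrow> s \<le> sT" unfolding sT_def using finBs by simp
  have amin_le: "\<And>a. a \<in> A \<Longrightarrow> amin \<le> a" unfolding amin_def using finA by simp
  have amax_ge: "\<And>a. a \<in> A \<Longrightarrow> a \<le> amax" unfolding amax_def using finA by simp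
  have s12: "s1 < s2" using s1le[OF s2in(1)] s2in(2) by simp
  define d where "d = s2 - s1"
  have dpos: "0 < d" unfolding d_def using s12 by simp
  have s2d: "s2 = s1 + d" unfolding d_def using s12 by simp
  define D where "D = (\<lambda>x. x + s1) ` A \<union> (\<lambda>y. amax + y) ` Bs"
  have DC: "D \<subseteq> C" unfolding D_def C_def sumset_def using s1in amaxA by blast
  have cardD: "card D = n + T - 1"
    using chain_card1[OF finA finBs Ane Bsne] cBs unfolding D_def n_def s1_def amax_def by simp
  have DeqC: "D = C" by (rule card_subset_eq[OF finC DC]) (use cardD cardC in simp)
  have F1: "a + d \<in> A" if a: "a \<in> A" and ne: "a \<noteq> Max A" for a
  proof -
    have "a + s2 \<in> C" unfolding C_def sumset_def using a s2in by blast
    then have "a + s2 \<in> D" using DeqC by simp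
    then show ?thesis unfolding D_def
    proof
      assume "a + s2 \<in> (\<lambda>x. x + s1) ` A"
      then obtain a' where "a' \<in> A" "a + s2 = a' + s1" by auto
      then show ?thesis using s2d by simp
    next
      assume "a + s2 \<in> (\<lambda>y. amax + y) ` Bs"
      then obtain s where s: "s \<in> Bs" "a + s2 = amax + s" by auto
      have "a < amax" using amax_ge[OF a] ne unfolding amax_def by (simp add: le_neq_implies_less)
      then have "s < s2" using s by simp
      then have "s = s1" using s2min[OF s(1)] by fastforce
      then have "a + d = amax" using s s2d by simp
      then show ?thesis using amaxA by simp
    qed
  qed
  have Aap: "\<And>x. x \<in> A \<longleftrightarrow> (\<exists>k<n. x = amin + k*d)"
    using ap_struct[OF finA Ane dpos F1] unfolding n_def amin_def by blast
  have n2: "2 \<le> n" using nK T2 by simp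
  have amind: "amin + d \<in> A" using Aap[of "amin + d"] n2 by (intro iffD2[OF Aap]) (rule exI[of _ 1], simp)
  define D' where "D' = (\<lambda>y. amin + y) ` Bs \<union> (\<lambda>x. x + sT) ` A"
  have D'C: "D' \<subseteq> C" unfolding D'_def C_def sumset_def using sTin aminA by blast
  have cardD': "card D' = n + T - 1"
    using chain_card2[OF finA finBs Ane Bsne] cBs unfolding D'_def n_def sT_def amin_def by simp
  have D'eqC: "D' = C" by (rule card_subset_eq[OF finC D'C]) (use cardD' cardC in simp)
  have F2: "s + d \<in> Bs" if s: "s \<in> Bs" and ne: "s \<noteq> Max Bs" for s
  proof -
    have "amin + d + s \<in> C" unfolding C_def sumset_def using amind s by blast
    then have "amin + d + s \<in> D'" using D'eqC by simp
    then show ?thesis unfolding D'_def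
    proof
      assume "amin + d + s \<in> (\<lambda>y. amin + y) ` Bs"
      then obtain s' where "s' \<in> Bs" "amin + d + s = amin + s'" by auto
      then show ?thesis by (simp add: add.commute)
    next
      assume "amin + d + s \<in> (\<lambda>x. x + sT) ` A"
      then obtain a where a: "a \<in> A" "amin + d + s = a + sT" by auto
      have "s < sT" using sTge[OF s] ne unfolding sT_def by (simp add: le_neq_implies_less)
      then have "a < amin + d" using a by simp
      moreover obtain k where k: "k < n" "a = amin + k*d" using Aap a(1) by blast
      ultimately have "k*d < 1*d" by simp
      then have "k = 0" by (metis less_one mult_less_cancel2)
      then have "s + d = sT" using a k by simp
      then show ?thesis using sTin by simp
    qed
  qed
  have Bap: "\<And>y. y \<in> Bs \<longleftrightarrow> (\<exists>j<T. y = s1 + j*d)"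
    using ap_struct[OF finBs Bsne dpos F2] cBs unfolding s1_def by blast
  have Cchar: "x \<in> C \<longleftrightarrow> (\<exists>m<n+T-1. x = amin + s1 + m*d)" for x
  proof
    assume "x \<in> C"
    then obtain a s where as: "a \<in> A" "s \<in> Bs" "x = a + s" unfolding C_def sumset_def by blast
    obtain k where k: "k < n" "a = amin + k*d" using Aap as(1) by blast
    obtain j where j: "j < T" "s = s1 + j*d" using Bap as(2) by blast
    have "x = amin + s1 + (k+j)*d" using as k j by (simp add: algebra_simps)
    moreover have "k + j < n + T - 1" using k j by simp
    ultimately show "\<exists>m<n+T-1. x = amin + s1 + m*d" by blast
  next
    assume "\<exists>m<n+T-1. x = amin + s1 + m*d"
    then obtain m where m: "m < n + T - 1" "x = amin + s1 + m*d" by blast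
    show "x \<in> C"
    proof (cases "m < n")
      case True
      have "amin + m*d \<in> A" using Aap True by blast
      moreover have "x = (amin + m*d) + s1" using m by simp
      ultimately have "\<exists>a\<in>A. \<exists>b\<in>Bs. x = a + b" using s1in by blast
      then show ?thesis unfolding C_def sumset_iff .
    next
      case False
      define j where "j = m - (n - 1)"
      have jT: "j < T" unfolding j_def using m False by simp
      have "n - 1 < n" using n2 by simp
      then have A1: "amin + (n-1)*d \<in> A" using Aap by blast
      have B1: "s1 + j*d \<in> Bs" using Bap jT by blast
      have "m = (n-1) + j" unfolding j_def using False by simp
      then have "x = (amin + (n-1)*d) + (s1 + j*d)" using m by (simp add: algebra_simps)
      then have "\<exists>a\<in>A. \<exists>b\<in>Bs. x = a + b" using A1 B1 by blast
      then show ?thesis unfolding C_def sumset_iff .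
    qed
  qed
  have key: "(amin \<in> As \<and> b = s1 + (n-1)*d) \<or> (amin \<notin> As \<and> b + card Ap * d = s1)" if b: "b \<in> Bp" for b
  proof -
    define I where "I = {k. k < n \<and> amin + k*d \<in> As}"
    have AsA: "As \<subseteq> A" unfolding A_def by simp
    have As_img: "As = (\<lambda>k. amin + k*d) ` I"
    proof
      show "As \<subseteq> (\<lambda>k. amin + k*d) ` I"
      proof
        fix x assume x: "x \<in> As"
        then obtain k where "k < n" "x = amin + k*d" using Aap AsA by blast
        then show "x \<in> (\<lambda>k. amin + k*d) ` I" unfolding I_def using x by blast
      qed
      show "(\<lambda>k. amin + k*d) ` I \<subseteq> As" unfolding I_def by blast
    qed
    have inj: "inj_on (\<lambda>k. amin + k*d) I" using dpos by (auto simp: inj_on_def)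
    have cardI: "card I = T" using card_image[OF inj] As_img cAs by simp
    have memI: "k \<in> I \<longleftrightarrow> amin + k*d + b \<in> C" if k: "k < n" for k
    proof
      assume "k \<in> I"
      then have "amin + k*d \<in> As" unfolding I_def by simp
      then have h1: "amin + k*d \<in> Ap \<union> As" "amin + k*d \<notin> Ap" using disjA by auto
      have h2: "b \<in> Bp \<union> Bs" using b by simp
      have "amin + k*d + b \<in> SS" by (rule S_in[OF h1(1) h2]) (use h1(2) in simp)
      then show "amin + k*d + b \<in> C" using CeqS by simp
    next
      assume h: "amin + k*d + b \<in> C"
      have "amin + k*d \<in> A" using Aap k by blast
      show "k \<in> I"
      proof (rule ccontr)
        assume "k \<notin> I"
        then have "amin + k*d \<in> Ap" using k \<open>amin + k*d \<in> A\<close> unfolding I_def A_def by simp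
        then have "amin + k*d + b \<notin> SS" using P_notin b by simp
        then show False using h CeqS by simp
      qed
    qed
    have "I \<noteq> {}" using cardI T2 by auto
    then obtain k0 where k0: "k0 \<in> I" by blast
    have k0n: "k0 < n" using k0 unfolding I_def by simp
    have "amin + k0*d + b \<in> C" using memI[OF k0n] k0 by simp
    then obtain m0 where m0: "m0 < n + T - 1" "amin + k0*d + b = amin + s1 + m0*d" using Cchar by blast
    show ?thesis
    proof (cases "k0 \<le> m0")
      case True
      define e where "e = m0 - k0"
      have m0e: "m0 * d = k0*d + e*d" unfolding e_def using True by (simp add: algebra_simps)
      have be: "b = s1 + e*d" using m0(2) m0e by simp
      have Ieq: "I = {..< min n (n + T - 1 - e)}"
      proof (rule set_eqI)
        fix k
        show "k \<in> I \<longleftrightarrow> k \<in> {..< min n (n + T - 1 - e)}"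
        proof (cases "k < n")
          case True
          have "k \<in> I \<longleftrightarrow> (\<exists>m<n+T-1. amin + k*d + b = amin + s1 + m*d)" using memI[OF True] Cchar by simp
          also have "\<dots> \<longleftrightarrow> (\<exists>m<n+T-1. (k + e)*d = m*d)" using be by (simp add: algebra_simps)
          also have "\<dots> \<longleftrightarrow> k + e < n + T - 1" using dpos by auto
          finally show ?thesis using True by auto
        next
          case False then show ?thesis unfolding I_def by simp
        qed
      qed
      have eb: "e < n + T - 1" using m0(1) True unfolding e_def by simp
      have "min n (n + T - 1 - e) = T" using cardI Ieq by simp
      then have "e = n - 1" using nK Kpos eb by (simp add: min_def split: if_splits)
      moreover have "0 \<in> I" using Ieq eb n2 by simp
      ultimately show ?thesis using be unfolding I_def by auto
    next
      case False
      define f where "f = k0 - m0"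
      have k0f: "k0 * d = m0*d + f*d" unfolding f_def using False by (simp add: algebra_simps)
      have bf: "s1 = b + f*d" using m0(2) k0f by simp
      have fpos: "0 < f" unfolding f_def using False by simp
      have Ieq: "I = {f..<n}"
      proof (rule set_eqI)
        fix k
        show "k \<in> I \<longleftrightarrow> k \<in> {f..<n}"
        proof (cases "k < n")
          case True
          have "k \<in> I \<longleftrightarrow> (\<exists>m<n+T-1. amin + k*d + b = amin + s1 + m*d)" using memI[OF True] Cchar by simp
          also have "\<dots> \<longleftrightarrow> (\<exists>m<n+T-1. k*d = (f + m)*d)" using bf by (simp add: algebra_simps)
          also have "\<dots> \<longleftrightarrow> (\<exists>m<n+T-1. k = f + m)" using dpos by simp
          also have "\<dots> \<longleftrightarrow> f \<le> k" using True T2 by (auto intro!: exI[of _ "k - f"])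
          finally show ?thesis using True by auto
        next
          case False then show ?thesis unfolding I_def by simp
        qed
      qed
      have "n - f = T" using cardI Ieq by simp
      then have "f = card Ap" using nK T2 by arith
      moreover have "0 \<notin> I" using Ieq fpos by simp
      ultimately show ?thesis using bf n2 unfolding I_def by auto
    qed
  qed
  obtain b1 b2 where b12: "b1 \<in> Bp" "b2 \<in> Bp" "b1 \<noteq> b2"
  proof -
    have "\<not> card Bp \<le> Suc 0" using Bp2 by simp
    then show ?thesis using that card_le_Suc0_iff_eq[OF finBp] by blast
  qed
  show False using key[OF b12(1)] key[OF b12(2)] b12(3) by auto
qed

end



context DT
begin

lemma main:
  assumes Bp2: "2 \<le> card Bp" and cAs: "card As = T" and cBs: "card Bs = T" and T1: "1 \<le> T"
    and Apne: "Ap \<noteq> {}"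
  shows "card Ap + 2*T \<le> card SS"
proof (cases "T = 1")
  case True
  have "As \<noteq> {}" "Bs \<noteq> {}" using cAs cBs T1 by auto
  then obtain a0 b0 where "a0 \<in> As" "b0 \<in> Bs" by blast
  then have "card Ap + card Bp \<le> card SS" by (rule boundW)
  then show ?thesis using True Bp2 by simp
next
  case False
  then have "2 \<le> T" using T1 by simp
  show ?thesis
  proof (rule ccontr)
    assume "\<not> card Ap + 2*T \<le> card SS"
    then have "card SS < card Ap + 2*T" by simp
    then show False using main_T2[OF Bp2 cAs cBs \<open>2 \<le> T\<close> Apne] by blast
  qed
qed

end

theorem theorem2:
  fixes K L T :: nat and ap as bp bs :: "nat list"
  assumes "0 < K" and "0 < L" and "0 < T"
    and "degree_table K L T ap as bp bs"
  shows "K * L + max K L + 2 * T - 1 \<le> NN (ap @ as) (bp @ bs)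
    \<and> ((3 * max K L + 3 * T - 2 < K * L \<or> (2 \<le> K \<and> K = L))
           \<longrightarrow> K * L + max K L + 2 * T \<le> NN (ap @ as) (bp @ bs))
    \<and> int (K * L + K + L + 2 * T) - 1 - int T * int (min K (min L T))
           \<le> int (NN (ap @ as) (bp @ bs))"
proof -
  note dt = assms(4)[unfolded degree_table_def]
  define Ap where "Ap = set ap"
  define As where "As = set as"
  define Bp where "Bp = set bp"
  define Bs where "Bs = set bs"
  have dA: "distinct ap" "distinct as" "Ap \<inter> As = {}" using dt unfolding Ap_def As_def by auto
  have dB: "distinct bp" "distinct bs" "Bp \<inter> Bs = {}" using dt unfolding Bp_def Bs_def by auto
  have cAp: "card Ap = K" unfolding Ap_def using distinct_card[OF dA(1)] dt by simp
  have cAs: "card As = T" unfolding As_def using distinct_card[OF dA(2)] dt by simp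
  have cBp: "card Bp = L" unfolding Bp_def using distinct_card[OF dB(1)] dt by simp
  have cBs: "card Bs = T" unfolding Bs_def using distinct_card[OF dB(2)] dt by simp
  have U: "\<forall>n \<in> sumset Ap Bp. \<exists>!p. p \<in> (Ap \<union> As) \<times> (Bp \<union> Bs) \<and> fst p + snd p = n"
    using dt unfolding Ap_def As_def Bp_def Bs_def by simp
  interpret DT Ap As Bp Bs
  proof
    show "finite Ap" "finite As" "finite Bp" "finite Bs" unfolding Ap_def As_def Bp_def Bs_def by auto
    show "Ap \<inter> As = {}" "Bp \<inter> Bs = {}" using dA dB by auto
    fix a b a' b' assume h: "a \<in> Ap" "b \<in> Bp" "a' \<in> Ap \<union> As" "b' \<in> Bp \<union> Bs" "a + b = a' + b'"
    have "a + b \<in> sumset Ap Bp" using h unfolding sumset_def by blast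
    have ex1: "\<exists>!p. p \<in> (Ap \<union> As) \<times> (Bp \<union> Bs) \<and> fst p + snd p = a + b" by (rule bspec[OF U]) fact
    have p1: "(a, b) \<in> (Ap \<union> As) \<times> (Bp \<union> Bs) \<and> fst (a,b) + snd (a,b) = a + b" using h by simp
    have p2: "(a', b') \<in> (Ap \<union> As) \<times> (Bp \<union> Bs) \<and> fst (a',b') + snd (a',b') = a + b" using h by simp
    have "(a, b) = (a', b')" using ex1 p1 p2 by (metis (no_types, lifting))
    then show "a = a' \<and> b = b'" by simp
  qed
  interpret S: DT Bp Bs Ap As by (rule sym)
  have NN: "NN (ap @ as) (bp @ bs) = K * L + card SS"
    unfolding NN_def using card_total cAp cBp unfolding Ap_def As_def Bp_def Bs_def by simp
  have ne: "Ap \<noteq> {}" "Bp \<noteq> {}" "As \<noteq> {}" "Bs \<noteq> {}" using cAp cBp cAs cBs assms(1-3) by auto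
  have cA: "card (Ap \<union> As) = K + T" using card_Un_disjoint[OF finAp finAs disjA] cAp cAs by simp
  have cB: "card (Bp \<union> Bs) = L + T" using card_Un_disjoint[OF finBp finBs disjB] cBp cBs by simp
  have b1: "K + 2*T - 1 \<le> card SS" using bound1[of] ne cA cBs by simp
  have b2: "L + 2*T - 1 \<le> card SS" using S.bound1 ne cB cAs SS_sym by simp
  have bW: "K + L \<le> card SS"
  proof -
    obtain a0 b0 where "a0 \<in> As" "b0 \<in> Bs" using ne by blast
    then show ?thesis using boundW cAp cBp by simp
  qed
  have part1: "K * L + max K L + 2 * T - 1 \<le> NN (ap @ as) (bp @ bs)"
    using NN b1 b2 assms(3) by (auto simp: max_def)
  have part2: "(3 * max K L + 3 * T - 2 < K * L \<or> (2 \<le> K \<and> K = L))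
           \<longrightarrow> K * L + max K L + 2 * T \<le> NN (ap @ as) (bp @ bs)"
  proof
    assume c: "3 * max K L + 3 * T - 2 < K * L \<or> (2 \<le> K \<and> K = L)"
    have K2: "2 \<le> K \<and> 2 \<le> L"
    proof (cases "2 \<le> K \<and> K = L")
      case True then show ?thesis by simp
    next
      case False
      then have c1: "3 * max K L + 3 * T - 2 < K * L" using c by blast
      show ?thesis
      proof (rule ccontr)
        assume "\<not> (2 \<le> K \<and> 2 \<le> L)"
        then have "K = 1 \<or> L = 1" using assms(1,2) by auto
        then have "K * L \<le> max K L" by auto
        then show False using c1 assms(3) by simp
      qed
    qed
    have m1: "K + 2*T \<le> card SS" using main[OF _ cAs cBs] K2 cBp cAp ne assms(3) by simp
    have m2: "L + 2*T \<le> card SS" using S.main[OF _ cBs cAs] K2 cAp cBp ne assms(3) SS_sym by simp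
    show "K * L + max K L + 2 * T \<le> NN (ap @ as) (bp @ bs)" using NN m1 m2 by (simp add: max_def)
  qed
  have part3: "int (K * L + K + L + 2 * T) - 1 - int T * int (min K (min L T))
           \<le> int (NN (ap @ as) (bp @ bs))"
  proof (cases "min K L \<le> T")
    case True
    then have m: "min K (min L T) = min K L" by (auto simp: min_def split: if_splits)
    have h: "min K L * 1 \<le> min K L * T" by (rule mult_le_mono2) (use assms(3) in simp)
    have "int (min K L) \<le> int T * int (min K L)"
      using h by (metis of_nat_le_iff of_nat_mult mult.commute mult_1_right)
    moreover have "int K + int L = int (max K L) + int (min K L)" by (simp add: max_def min_def)
    moreover have "int (max K L) + 2 * int T - 1 \<le> int (card SS)" using b1 b2 assms(3) by (auto simp: max_def)
    ultimately show ?thesis using NN m by simp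
  next
    case False
    then have m: "min K (min L T) = T" by (auto simp: min_def split: if_splits)
    have "0 \<le> (int T - 1) * (int T - 1)" by simp
    then have "2 * int T - 1 \<le> int T * int T" by (simp add: algebra_simps)
    moreover have "int K + int L \<le> int (card SS)" using bW by simp
    ultimately show ?thesis using NN m by simp
  qed
  show ?thesis using part1 part2 part3 by blast
qed


end
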